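(* Let $(V,F)$ be a near vector space with $(F,\circ)$ commutative. Then $(V,F)$ is regular if and only if for any $u\in Q(V)\setminus\{0\}$, $V$ is a vector space over the field $(F,+_u,\circ)$ (with scalar multiplication given by the action of $F$ on $V$); in the regular case all the operations $+_u$, $u\in Q(V)\setminus\{0\}$, coincide.
   Context: An F-group is a pair $(V,F)$ where $(V,+)$ is a group and $F$ is a set of endomorphisms of $V$ such that: the maps $0,1,-1$ lie in $F$; $F\setminus\{0\}$ is a subgroup of $\mathrm{Aut}(V,+)$ under composition; and if $\alpha x=\beta x$ with $\alpha,\beta\in F$, $x\in V$ then $\alpha=\beta$ or $x=0$. The quasi-kernel $Q(V)$ is the set of $u\in V$ such that for all $\alpha,\beta\in F$ there is $\gamma\in F$ with $\alpha u+\beta u=\gamma u$. $(V,F)$ is a near vector space if $Q(V)$ generates $(V,+)$. Commutativity means $\alpha(\beta v)=\beta(\alpha v)$ for all $\alpha,\beta\in F$, $v\in V$. For $u\in Q(V)\setminus\{0\}$, $\alpha+_u\beta$ denotes the unique $\gamma$ with $\alpha u+\beta u=\gamma u$; when $F$ is commutative, $(F,+_u,\circ)$ is a field. Elements $u,v\in Q(V)$ are compatible if there is $\lambda\in F\setminus\{0\}$ with $u+\lambda v\in Q(V)$; $V$ is regular if all elements of $Q(V)\setminus\{0\}$ are pairwise compatible. *)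

theory Defs
  imports "HOL-Algebra.Module"
begin

text \<open>The group (V,+) is the type 'v with its (not necessarily abelian) group structure;
  F is a set of maps 'v => 'v.\<close>

definition endo :: "('v::group_add \<Rightarrow> 'v) \<Rightarrow> bool" where
  "endo f \<longleftrightarrow> (\<forall>x y. f (x + y) = f x + f y)"

definition F_group :: "('v::group_add \<Rightarrow> 'v) set \<Rightarrow> bool" where
  "F_group F \<longleftrightarrow>
     (\<forall>f\<in>F. endo f) \<and>
     (\<lambda>x. 0) \<in> F \<and> id \<in> F \<and> uminus \<in> F \<and>
     (\<forall>f\<in>F - {\<lambda>x. 0}. bij f) \<and>
     (\<forall>f\<in>F - {\<lambda>x. 0}. \<forall>g\<in>F - {\<lambda>x. 0}. f \<circ> g \<in> F - {\<lambda>x. 0}) \<and>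
     (\<forall>f\<in>F - {\<lambda>x. 0}. inv_into UNIV f \<in> F - {\<lambda>x. 0}) \<and>
     (\<forall>\<alpha>\<in>F. \<forall>\<beta>\<in>F. \<forall>x. \<alpha> x = \<beta> x \<longrightarrow> \<alpha> = \<beta> \<or> x = 0)"

definition quasi_kernel :: "('v::group_add \<Rightarrow> 'v) set \<Rightarrow> 'v set" where
  "quasi_kernel F = {u. \<forall>\<alpha>\<in>F. \<forall>\<beta>\<in>F. \<exists>\<gamma>\<in>F. \<alpha> u + \<beta> u = \<gamma> u}"

definition gen_subgroup :: "'v::group_add set \<Rightarrow> 'v set" where
  "gen_subgroup S = \<Inter>{H. 0 \<in> H \<and> (\<forall>x\<in>H. \<forall>y\<in>H. x + y \<in> H) \<and> (\<forall>x\<in>H. - x \<in> H) \<and> S \<subseteq> H}"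

definition near_vector_space :: "('v::group_add \<Rightarrow> 'v) set \<Rightarrow> bool" where
  "near_vector_space F \<longleftrightarrow> F_group F \<and> gen_subgroup (quasi_kernel F) = UNIV"

definition F_commutative :: "('v \<Rightarrow> 'v) set \<Rightarrow> bool" where
  "F_commutative F \<longleftrightarrow> (\<forall>\<alpha>\<in>F. \<forall>\<beta>\<in>F. \<forall>v. \<alpha> (\<beta> v) = \<beta> (\<alpha> v))"

definition plus_u :: "('v::group_add \<Rightarrow> 'v) set \<Rightarrow> 'v \<Rightarrow> ('v \<Rightarrow> 'v) \<Rightarrow> ('v \<Rightarrow> 'v) \<Rightarrow> ('v \<Rightarrow> 'v)" where
  "plus_u F u \<alpha> \<beta> = (THE \<gamma>. \<gamma> \<in> F \<and> \<alpha> u + \<beta> u = \<gamma> u)"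

definition compatible :: "('v::group_add \<Rightarrow> 'v) set \<Rightarrow> 'v \<Rightarrow> 'v \<Rightarrow> bool" where
  "compatible F u v \<longleftrightarrow> (\<exists>l\<in>F - {\<lambda>x. 0}. u + l v \<in> quasi_kernel F)"

definition regular :: "('v::group_add \<Rightarrow> 'v) set \<Rightarrow> bool" where
  "regular F \<longleftrightarrow> (\<forall>u\<in>quasi_kernel F - {0}. \<forall>v\<in>quasi_kernel F - {0}. compatible F u v)"

definition scalar_ring :: "('v::group_add \<Rightarrow> 'v) set \<Rightarrow> 'v \<Rightarrow> ('v \<Rightarrow> 'v) ring" where
  "scalar_ring F u = \<lparr>carrier = F, mult = (\<circ>), one = id, zero = (\<lambda>x. 0), add = plus_u F u\<rparr>"

text \<open>(V,+) with scalar multiplication given by the action of F on V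
  (the multiplicative monoid fields of V are irrelevant for modules).\<close>
definition action_module :: "('v::group_add \<Rightarrow> 'v, 'v) module" where
  "action_module = \<lparr>carrier = UNIV, mult = (\<lambda>x y. undefined), one = undefined,
                    zero = 0, add = (+), smult = (\<lambda>a v. a v)\<rparr>"

definition vector_space_over_u :: "('v::group_add \<Rightarrow> 'v) set \<Rightarrow> 'v \<Rightarrow> bool" where
  "vector_space_over_u F u \<longleftrightarrow> field (scalar_ring F u) \<and> module (scalar_ring F u) action_module"

end

theory Submission
  imports Defs
begin

lemma endo_zero: "endo f \<Longrightarrow> f 0 = (0::'v::group_add)"
  unfolding endo_def by (metis add_0 add_right_cancel)

lemma endo_minus: "endo f \<Longrightarrow> f (- x) = - f (x::'v::group_add)"
proof -
  assume e: "endo f"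
  have "f (-x + x) = f (-x) + f x" using e unfolding endo_def by blast
  then have "0 = f (-x) + f x" using endo_zero[OF e] by simp
  then show ?thesis by (simp add: eq_neg_iff_add_eq_0)
qed

context
  fixes F :: "('v::group_add \<Rightarrow> 'v) set"
  assumes FG: "F_group F" and FC: "F_commutative F"
begin

lemma FGs:
  "\<forall>f\<in>F. endo f" "(\<lambda>x. 0) \<in> F" "id \<in> F" "uminus \<in> F"
  "\<forall>f\<in>F - {\<lambda>x. 0}. bij f"
  "\<forall>f\<in>F - {\<lambda>x. 0}. \<forall>g\<in>F - {\<lambda>x. 0}. f \<circ> g \<in> F - {\<lambda>x. 0}"
  "\<forall>f\<in>F - {\<lambda>x. 0}. inv_into UNIV f \<in> F - {\<lambda>x. 0}"
  "\<forall>\<alpha>\<in>F. \<forall>\<beta>\<in>F. \<forall>x. \<alpha> x = \<beta> x \<longrightarrow> \<alpha> = \<beta> \<or> x = 0"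
  using FG unfolding F_group_def by simp_all

lemma F_endo: "f \<in> F \<Longrightarrow> endo f"
  using FGs(1) by (rule bspec)

lemma F_add: "f \<in> F \<Longrightarrow> f (x + y) = f x + f y"
  using F_endo unfolding endo_def by simp

lemma F_zero: "f \<in> F \<Longrightarrow> f 0 = 0"
  by (rule endo_zero[OF F_endo])

lemma F_minus: "f \<in> F \<Longrightarrow> f (- x) = - f x"
  by (rule endo_minus[OF F_endo])

lemma zero_in: "(\<lambda>x. 0) \<in> F" and id_in: "id \<in> F" and uminus_in: "uminus \<in> F"
  using FGs(2-4) .

lemma comp_nz: "f \<in> F \<Longrightarrow> f \<noteq> (\<lambda>x. 0) \<Longrightarrow> g \<in> F \<Longrightarrow> g \<noteq> (\<lambda>x. 0) \<Longrightarrow> f \<circ> g \<in> F"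
proof -
  assume "f \<in> F" "f \<noteq> (\<lambda>x. 0)" "g \<in> F" "g \<noteq> (\<lambda>x. 0)"
  then have "f \<in> F - {\<lambda>x. 0}" "g \<in> F - {\<lambda>x. 0}" by simp_all
  then have "f \<circ> g \<in> F - {\<lambda>x. 0}" using FGs(6) by simp
  then show ?thesis by simp
qed

lemma comp_in: "f \<in> F \<Longrightarrow> g \<in> F \<Longrightarrow> f \<circ> g \<in> F"
proof -
  assume f: "f \<in> F" and g: "g \<in> F"
  show ?thesis
  proof (cases "f = (\<lambda>x. 0)")
    case True then show ?thesis using zero_in by (simp add: comp_def)
  next
    case False
    show ?thesis
    proof (cases "g = (\<lambda>x. 0)")
      case True then show ?thesis using zero_in F_zero[OF f] by (simp add: comp_def)
    next
      case False': False
      then show ?thesis using False f g comp_nz by simp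
    qed
  qed
qed

lemma bij_F: "f \<in> F \<Longrightarrow> f \<noteq> (\<lambda>x. 0) \<Longrightarrow> bij f"
  using FGs(5) by simp

lemma inv_in: "f \<in> F \<Longrightarrow> f \<noteq> (\<lambda>x. 0) \<Longrightarrow> inv_into UNIV f \<in> F"
  using FGs(7) by simp

lemma sep: "\<alpha> \<in> F \<Longrightarrow> \<beta> \<in> F \<Longrightarrow> \<alpha> x = \<beta> x \<Longrightarrow> x \<noteq> 0 \<Longrightarrow> \<alpha> = \<beta>"
  using FGs(8) by metis

lemma nz_app: "f \<in> F \<Longrightarrow> f x = 0 \<Longrightarrow> x \<noteq> 0 \<Longrightarrow> f = (\<lambda>x. 0)"
  using sep[of f "\<lambda>x. 0" x] zero_in by simp

lemma add_comm: "(x::'v) + y = y + x"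
proof -
  have h: "- (a + b) = - a + - b" for a b :: 'v using F_add[OF uminus_in] .
  have "- (- y + - x) = - (- y) + - (- x)" by (rule h)
  then have "- (- y + - x) = y + x" by simp
  moreover have "- (- y + - x) = x + y" by (simp add: minus_add)
  ultimately show ?thesis by simp
qed

lemma add_lcomm: "(x::'v) + (y + z) = y + (x + z)"
proof -
  have "x + (y + z) = (x + y) + z" by (simp add: add.assoc)
  also have "\<dots> = (y + x) + z" using add_comm[of x y] by simp
  finally show ?thesis by (simp add: add.assoc)
qed

lemmas vac = add.assoc add_comm add_lcomm

lemma neg_comp_in: "\<delta> \<in> F \<Longrightarrow> uminus \<circ> \<delta> \<in> F"
  using comp_in uminus_in by blast

lemma plus_u_prop:
  assumes u: "u \<in> quasi_kernel F" "u \<noteq> 0" and ab: "\<alpha> \<in> F" "\<beta> \<in> F"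
  shows "plus_u F u \<alpha> \<beta> \<in> F \<and> plus_u F u \<alpha> \<beta> u = \<alpha> u + \<beta> u"
proof -
  obtain \<gamma> where g: "\<gamma> \<in> F" "\<alpha> u + \<beta> u = \<gamma> u" using u ab unfolding quasi_kernel_def by blast
  have "plus_u F u \<alpha> \<beta> = \<gamma>" unfolding plus_u_def
  proof (rule the_equality)
    show "\<gamma> \<in> F \<and> \<alpha> u + \<beta> u = \<gamma> u" using g by blast
  next
    fix \<gamma>' assume "\<gamma>' \<in> F \<and> \<alpha> u + \<beta> u = \<gamma>' u"
    then show "\<gamma>' = \<gamma>" using sep g u by metis
  qed
  then show ?thesis using g by simp
qed

lemma scal_lemma:
  assumes v: "v \<in> quasi_kernel F" "v \<noteq> 0" and m: "\<mu> \<in> F" and ab: "\<alpha> \<in> F" "\<beta> \<in> F"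
  shows "\<alpha> (\<mu> v) + \<beta> (\<mu> v) = plus_u F v \<alpha> \<beta> (\<mu> v)"
proof -
  have p: "plus_u F v \<alpha> \<beta> \<in> F" "plus_u F v \<alpha> \<beta> v = \<alpha> v + \<beta> v"
    using plus_u_prop[OF v ab] by auto
  have "plus_u F v \<alpha> \<beta> (\<mu> v) = \<mu> (plus_u F v \<alpha> \<beta> v)"
    using FC p(1) m unfolding F_commutative_def by metis
  also have "\<dots> = \<mu> (\<alpha> v) + \<mu> (\<beta> v)" using p(2) F_add[OF m] by simp
  also have "\<dots> = \<alpha> (\<mu> v) + \<beta> (\<mu> v)" using FC m ab unfolding F_commutative_def by metis
  finally show ?thesis by simp
qed

lemma group_rearr: "(a::'v) + b = c + d \<Longrightarrow> a + - c = d + - b"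
proof -
  assume h: "a + b = c + d"
  have "a + - c = (a + b) + - b + - c" by (simp add: add.assoc)
  also have "\<dots> = (c + d) + - b + - c" using h by simp
  also have "\<dots> = d + - b" by (simp add: vac)
  finally show ?thesis .
qed

lemma coincide:
  assumes u: "u \<in> quasi_kernel F" "u \<noteq> 0" and v: "v \<in> quasi_kernel F" "v \<noteq> 0"
    and lam: "l \<in> F" "l \<noteq> (\<lambda>x. 0)" and w: "u + l v \<in> quasi_kernel F"
    and ab: "\<alpha> \<in> F" "\<beta> \<in> F"
  shows "plus_u F u \<alpha> \<beta> = plus_u F v \<alpha> \<beta>"
proof -
  define \<delta> where "\<delta> = plus_u F u \<alpha> \<beta>"
  define \<epsilon> where "\<epsilon> = plus_u F v \<alpha> \<beta>"
  have d: "\<delta> \<in> F" "\<delta> u = \<alpha> u + \<beta> u" using plus_u_prop[OF u ab] \<delta>_def by auto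
  have e: "\<epsilon> \<in> F" "\<epsilon> v = \<alpha> v + \<beta> v" using plus_u_prop[OF v ab] \<epsilon>_def by auto
  obtain \<gamma> where g: "\<gamma> \<in> F" "\<alpha> (u + l v) + \<beta> (u + l v) = \<gamma> (u + l v)"
    using w ab unfolding quasi_kernel_def by blast
  have lv: "l v \<noteq> 0" using nz_app lam v by blast
  have sl: "\<alpha> (l v) + \<beta> (l v) = \<epsilon> (l v)" using scal_lemma[OF v lam(1) ab] \<epsilon>_def by simp
  have "\<gamma> u + \<gamma> (l v) = \<alpha> (u + l v) + \<beta> (u + l v)" using g F_add by simp
  also have "\<dots> = (\<alpha> u + \<beta> u) + (\<alpha> (l v) + \<beta> (l v))" by (simp add: F_add[OF ab(1)] F_add[OF ab(2)] vac)
  also have "\<dots> = \<delta> u + \<epsilon> (l v)" using d sl by simp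
  finally have eq1: "\<gamma> u + \<gamma> (l v) = \<delta> u + \<epsilon> (l v)" .
  then have eq2: "\<gamma> u + - \<delta> u = \<epsilon> (l v) + - \<gamma> (l v)" by (rule group_rearr)
  obtain \<zeta> where z: "\<zeta> \<in> F" "\<gamma> u + (uminus \<circ> \<delta>) u = \<zeta> u"
    using u(1) g(1) neg_comp_in[OF d(1)] unfolding quasi_kernel_def by blast
  obtain \<eta> where n: "\<eta> \<in> F" "\<epsilon> v + (uminus \<circ> \<gamma>) v = \<eta> v"
    using v(1) e(1) neg_comp_in[OF g(1)] unfolding quasi_kernel_def by blast
  have "\<eta> (l v) = l (\<eta> v)" using FC n(1) lam(1) unfolding F_commutative_def by metis
  also have "\<dots> = l (\<epsilon> v) + - l (\<gamma> v)" using n(2) F_add[OF lam(1)] F_minus[OF lam(1)] by (metis comp_apply)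
  also have "\<dots> = \<epsilon> (l v) + - \<gamma> (l v)" using FC e(1) g(1) lam(1) unfolding F_commutative_def by metis
  finally have key: "\<zeta> u = \<eta> (l v)" using eq2 z(2) by simp
  show ?thesis
  proof (cases "\<zeta> = (\<lambda>x. 0)")
    case True
    then have "\<gamma> u + - \<delta> u = 0" using z by simp
    then have "\<gamma> u = \<delta> u" by (simp add: add_eq_0_iff2)
    then have gd: "\<gamma> = \<delta>" using sep g(1) d(1) u(2) by blast
    have "\<eta> (l v) = 0" using key True by simp
    then have "\<eta> = (\<lambda>x. 0)" using nz_app n(1) lv by blast
    then have "\<epsilon> v + - \<gamma> v = 0" using n by simp
    then have "\<epsilon> v = \<gamma> v" by (simp add: add_eq_0_iff2)
    then have "\<epsilon> = \<gamma>" using sep g(1) e(1) v(2) by blast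
    then show ?thesis using gd \<delta>_def \<epsilon>_def by simp
  next
    case False
    define \<zeta>' where "\<zeta>' = inv_into UNIV \<zeta>"
    have zi: "\<zeta>' \<in> F" using inv_in False z(1) \<zeta>'_def by blast
    have "inj \<zeta>" using bij_F[OF z(1) False] bij_is_inj by blast
    then have "u = \<zeta>' (\<zeta> u)" unfolding \<zeta>'_def by simp
    also have "\<dots> = (\<zeta>' \<circ> \<eta> \<circ> l) v" using key by simp
    finally have uu: "u = (\<zeta>' \<circ> \<eta> \<circ> l) v" .
    have mu: "\<zeta>' \<circ> \<eta> \<circ> l \<in> F" using comp_in zi n(1) lam(1) by blast
    have "\<alpha> u + \<beta> u = \<epsilon> u" using scal_lemma[OF v mu ab] uu \<epsilon>_def by simp
    then have "\<delta> u = \<epsilon> u" using d by simp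
    then have "\<delta> = \<epsilon>" using sep d(1) e(1) u(2) by blast
    then show ?thesis using \<delta>_def \<epsilon>_def by simp
  qed
qed

lemma regular_coincide:
  assumes "regular F" "u \<in> quasi_kernel F" "u \<noteq> 0" "v \<in> quasi_kernel F" "v \<noteq> 0" "\<alpha> \<in> F" "\<beta> \<in> F"
  shows "plus_u F u \<alpha> \<beta> = plus_u F v \<alpha> \<beta>"
proof -
  obtain l where "l \<in> F - {\<lambda>x. 0}" "u + l v \<in> quasi_kernel F"
    using assms unfolding regular_def compatible_def by blast
  then show ?thesis using coincide assms by blast
qed

lemma pointwise:
  assumes gen: "gen_subgroup (quasi_kernel F) = UNIV" and reg: "regular F"
    and u: "u \<in> quasi_kernel F" "u \<noteq> 0"
  shows "\<forall>\<alpha>\<in>F. \<forall>\<beta>\<in>F. plus_u F u \<alpha> \<beta> x = \<alpha> x + \<beta> x"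
proof -
  define P where "P = {x. \<forall>\<alpha>\<in>F. \<forall>\<beta>\<in>F. plus_u F u \<alpha> \<beta> x = \<alpha> x + \<beta> x}"
  have pin: "\<alpha> \<in> F \<Longrightarrow> \<beta> \<in> F \<Longrightarrow> plus_u F u \<alpha> \<beta> \<in> F" for \<alpha> \<beta> using plus_u_prop[OF u] by blast
  have "0 \<in> P" by (simp add: P_def pin F_zero)
  moreover have "\<forall>x\<in>P. \<forall>y\<in>P. x + y \<in> P"
  proof (intro ballI)
    fix x y assume xP: "x \<in> P" and yP: "y \<in> P"
    show "x + y \<in> P" unfolding P_def
    proof (intro CollectI ballI)
      fix \<alpha> \<beta> assume ab: "\<alpha> \<in> F" "\<beta> \<in> F"
      have "plus_u F u \<alpha> \<beta> (x + y) = plus_u F u \<alpha> \<beta> x + plus_u F u \<alpha> \<beta> y"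
        using F_add pin ab by blast
      also have "\<dots> = (\<alpha> x + \<beta> x) + (\<alpha> y + \<beta> y)" using xP yP ab unfolding P_def by simp
      also have "\<dots> = \<alpha> (x + y) + \<beta> (x + y)" by (simp add: F_add[OF ab(1)] F_add[OF ab(2)] vac)
      finally show "plus_u F u \<alpha> \<beta> (x + y) = \<alpha> (x + y) + \<beta> (x + y)" .
    qed
  qed
  moreover have "\<forall>x\<in>P. - x \<in> P"
  proof (intro ballI)
    fix x assume xP: "x \<in> P"
    show "- x \<in> P" unfolding P_def
    proof (intro CollectI ballI)
      fix \<alpha> \<beta> assume ab: "\<alpha> \<in> F" "\<beta> \<in> F"
      have "plus_u F u \<alpha> \<beta> (- x) = - plus_u F u \<alpha> \<beta> x"
        using F_minus pin ab by blast
      also have "\<dots> = - (\<alpha> x + \<beta> x)" using xP ab unfolding P_def by simp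
      also have "\<dots> = \<alpha> (- x) + \<beta> (- x)"
        by (simp add: F_minus[OF ab(1)] F_minus[OF ab(2)] minus_add add_comm)
      finally show "plus_u F u \<alpha> \<beta> (- x) = \<alpha> (- x) + \<beta> (- x)" .
    qed
  qed
  moreover have "quasi_kernel F \<subseteq> P"
  proof
    fix x assume x: "x \<in> quasi_kernel F"
    show "x \<in> P"
    proof (cases "x = 0")
      case True then show ?thesis using \<open>0 \<in> P\<close> by simp
    next
      case False
      show ?thesis unfolding P_def
        using regular_coincide[OF reg u x False] plus_u_prop[OF x False] by simp
    qed
  qed
  ultimately have "gen_subgroup (quasi_kernel F) \<subseteq> P" unfolding gen_subgroup_def by blast
  then show ?thesis using gen unfolding P_def by blast
qed

lemma vs_from_pointwise:
  assumes u: "u \<in> quasi_kernel F" "u \<noteq> 0"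
    and pw: "\<And>\<alpha> \<beta> x. \<alpha> \<in> F \<Longrightarrow> \<beta> \<in> F \<Longrightarrow> plus_u F u \<alpha> \<beta> x = \<alpha> x + \<beta> x"
  shows "vector_space_over_u F u"
proof -
  have pin: "\<alpha> \<in> F \<Longrightarrow> \<beta> \<in> F \<Longrightarrow> plus_u F u \<alpha> \<beta> \<in> F" for \<alpha> \<beta> using plus_u_prop[OF u] by blast
  have pf: "\<alpha> \<in> F \<Longrightarrow> \<beta> \<in> F \<Longrightarrow> plus_u F u \<alpha> \<beta> = (\<lambda>x. \<alpha> x + \<beta> x)" for \<alpha> \<beta> using pw by blast
  let ?R = "scalar_ring F u"
  have ag: "abelian_group ?R"
  proof (rule abelian_groupI, simp_all add: scalar_ring_def pin zero_in)
    show "\<And>x y z. x \<in> F \<Longrightarrow> y \<in> F \<Longrightarrow> z \<in> F \<Longrightarrow>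
       plus_u F u (plus_u F u x y) z = plus_u F u x (plus_u F u y z)"
      by (simp add: fun_eq_iff pw pin add.assoc)
    show "\<And>x y. x \<in> F \<Longrightarrow> y \<in> F \<Longrightarrow> plus_u F u x y = plus_u F u y x"
      by (simp add: pf add_comm)
    show "\<And>x. x \<in> F \<Longrightarrow> plus_u F u (\<lambda>x. 0) x = x"
      by (simp add: pf zero_in)
    show "\<And>x. x \<in> F \<Longrightarrow> \<exists>y\<in>F. plus_u F u y x = (\<lambda>x. 0)"
    proof -
      fix x assume x: "x \<in> F"
      have "uminus \<circ> x \<in> F" using neg_comp_in x by blast
      moreover have "plus_u F u (uminus \<circ> x) x = (\<lambda>x. 0)" using pf[OF calculation x] by simp
      ultimately show "\<exists>y\<in>F. plus_u F u y x = (\<lambda>x. 0)" by blast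
    qed
  qed
  have cm: "comm_monoid ?R"
  proof (rule comm_monoidI, simp_all add: scalar_ring_def comp_in id_in o_assoc)
    show "\<And>x y. x \<in> F \<Longrightarrow> y \<in> F \<Longrightarrow> x \<circ> y = y \<circ> x"
      using FC unfolding F_commutative_def by (auto simp: fun_eq_iff)
  qed
  have cr: "cring ?R"
  proof (rule cringI[OF ag cm], simp add: scalar_ring_def)
    fix x y z assume "x \<in> F" "y \<in> F" "z \<in> F"
    then show "plus_u F u x y \<circ> z = plus_u F u (x \<circ> z) (y \<circ> z)"
      by (simp add: fun_eq_iff pw comp_in)
  qed
  have fld: "field ?R"
  proof (rule cring.cring_fieldI2[OF cr])
    show "\<zero>\<^bsub>?R\<^esub> \<noteq> \<one>\<^bsub>?R\<^esub>"
      using u(2) by (simp add: scalar_ring_def fun_eq_iff) (metis id_apply)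
  next
    fix a assume a: "a \<in> carrier ?R" "a \<noteq> \<zero>\<^bsub>?R\<^esub>"
    then have a': "a \<in> F" "a \<noteq> (\<lambda>x. 0)" by (simp_all add: scalar_ring_def)
    have "inv_into UNIV a \<in> F" using inv_in a' by blast
    moreover have "a \<circ> inv_into UNIV a = id"
      using bij_F[OF a'] by (simp add: fun_eq_iff bij_is_surj surj_f_inv_f)
    ultimately show "\<exists>b\<in>carrier ?R. a \<otimes>\<^bsub>?R\<^esub> b = \<one>\<^bsub>?R\<^esub>"
      by (auto simp: scalar_ring_def)
  qed
  have agm: "abelian_group (action_module :: ('v \<Rightarrow> 'v, 'v) module)"
    by (rule abelian_groupI) (auto simp: action_module_def vac intro: exI[of _ "- x" for x])
  have md: "module ?R (action_module :: ('v \<Rightarrow> 'v, 'v) module)"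
  proof (rule moduleI[OF cr agm])
  qed (simp_all add: scalar_ring_def action_module_def pf F_add)
  show ?thesis unfolding vector_space_over_u_def using fld md by blast
qed

end

theorem mainTheorem3:
  fixes F :: "('v::group_add \<Rightarrow> 'v) set"
  assumes "near_vector_space F"
    and "F_commutative F"
  shows "(regular F \<longleftrightarrow> (\<forall>u\<in>quasi_kernel F - {0}. vector_space_over_u F u))
         \<and> (regular F \<longrightarrow>
              (\<forall>u\<in>quasi_kernel F - {0}. \<forall>v\<in>quasi_kernel F - {0}.
                 \<forall>\<alpha>\<in>F. \<forall>\<beta>\<in>F. plus_u F u \<alpha> \<beta> = plus_u F v \<alpha> \<beta>))"
proof -
  have FG: "F_group F" and gen: "gen_subgroup (quasi_kernel F) = UNIV"
    using assms(1) unfolding near_vector_space_def by auto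
  note FC = assms(2)
  have A: "regular F \<Longrightarrow> (\<forall>u\<in>quasi_kernel F - {0}. vector_space_over_u F u)"
  proof
    fix u assume reg: "regular F" and u: "u \<in> quasi_kernel F - {0}"
    show "vector_space_over_u F u"
      using vs_from_pointwise[OF FG FC, of u] pointwise[OF FG FC gen reg, of u] u by blast
  qed
  have B: "regular F" if vs: "\<forall>u\<in>quasi_kernel F - {0}. vector_space_over_u F u"
    unfolding regular_def
  proof (intro ballI)
    fix u v assume u: "u \<in> quasi_kernel F - {0}" and v: "v \<in> quasi_kernel F - {0}"
    have V: "vector_space_over_u F u" using vs u by blast
    then have md: "module (scalar_ring F u) (action_module :: ('v \<Rightarrow> 'v, 'v) module)"
      and cr: "cring (scalar_ring F u)"
      unfolding vector_space_over_u_def using module.axioms(1) by blast+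
    have "x \<in> quasi_kernel F" for x
      unfolding quasi_kernel_def
    proof (intro CollectI ballI)
      fix \<alpha> \<beta> assume ab: "\<alpha> \<in> F" "\<beta> \<in> F"
      have "plus_u F u \<alpha> \<beta> \<in> F"
        using cring.cring_simprules(1)[OF cr, of \<alpha> \<beta>] ab by (simp add: scalar_ring_def)
      moreover have "plus_u F u \<alpha> \<beta> x = \<alpha> x + \<beta> x"
        using module.smult_l_distr[OF md, of \<alpha> \<beta> x] ab
        by (simp add: scalar_ring_def action_module_def)
      ultimately show "\<exists>\<gamma>\<in>F. \<alpha> x + \<beta> x = \<gamma> x" by metis
    qed
    moreover have "id \<in> F - {\<lambda>x. 0}" using id_in[OF FG FC] v by (auto simp: fun_eq_iff)
    ultimately show "compatible F u v" unfolding compatible_def by blast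
  qed
  have C: "regular F \<longrightarrow>
              (\<forall>u\<in>quasi_kernel F - {0}. \<forall>v\<in>quasi_kernel F - {0}.
                 \<forall>\<alpha>\<in>F. \<forall>\<beta>\<in>F. plus_u F u \<alpha> \<beta> = plus_u F v \<alpha> \<beta>)"
    using regular_coincide[OF FG FC] by blast
  show ?thesis using A B C by blast
qed

end
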